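(* Fix $\delta \ge 0$ and a risk prediction function $\hat{p}:\mathcal{X}\to[0,1]$. Let $(X_i,Y_i)$, $i=1,\dots,n$, be i.i.d. copies of $(X,Y)$ with $Y\in\{0,1\}$ and $\Pr(Y=1\mid X)=p_0(X)$, and suppose the one-sided null hypothesis $H_{0,>}:\Pr(X\in A_{\delta,>})=0$ holds, where $A_{\delta,>}=\{x: p_0(x)-\hat{p}(x)>\delta\}$. Split the data into a training partition (observations $1,\dots,n_1$) and a test partition (observations $n_1+1,\dots,n$, with $n_2=n-n_1$). Using only the training partition, fit a finite collection of bounded residual models $\hat g_{\lambda,n}:\mathcal{X}\to\mathbb{R}$, $\lambda\in\Lambda$, and form the detector class $$\widehat{\mathcal{H}}_{+,\Lambda}=\big\{x\mapsto \hat g_{\lambda,n}(x)\mathbb{1}\{\hat g_{\lambda,n}(x)>\gamma\} : \gamma\ge 0,\ \lambda\in\Lambda\big\}.$$ Define the test statistic $$\hat T^{(split)}_{n,>}=\sup_{h\in\widehat{\mathcal{H}}_{+,\Lambda}}\frac{1}{n_2}\sum_{i=n_1+1}^n (Y_i-\hat p_\delta(X_i))h(X_i).$$ Conditionally on the training partition and on $X_{n_1+1},\dots,X_n$, let $Y_i^*$, $i=n_1+1,\dots,n$, be independent Bernoulli random variables with $\Pr(Y_i^*=1)=\hat p_\delta(X_i)$, let $$T^{*(split)}_{>}=\sup_{h\in\widehat{\mathcal{H}}_{+,\Lambda}}\frac{1}{n_2}\sum_{i=n_1+1}^n (Y^*_i-\hat p_\delta(X_i))h(X_i),$$ and let $\tau_\alpha$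 be the $1-\alpha$ quantile of the conditional distribution of $T^{*(split)}_{>}$. Then the test that rejects when $\hat T^{(split)}_{n,>}>\tau_\alpha$ has Type I error at most $\alpha$ (for every finite $n$), i.e. $\Pr(\hat T^{(split)}_{n,>}>\tau_\alpha)\le\alpha$.
   Context: $\hat{p}_\delta(x) = [\hat{p}(x)+\delta]_{[0,1]}$, where $[q]_{[0,1]}$ denotes clipping of $q$ to the interval $[0,1]$. The $1-\alpha$ quantile of a random variable $T$ is $\inf\{t:\Pr(T\le t)\ge 1-\alpha\}$. *)

theory Defs
  imports "HOL-Probability.Probability"
begin

definition pdelta :: "('x \<Rightarrow> real) \<Rightarrow> real \<Rightarrow> 'x \<Rightarrow> real" where
  "pdelta phat \<delta> x = max 0 (min 1 (phat x + \<delta>))"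

definition split_stat ::
  "'l set \<Rightarrow> ('l \<Rightarrow> 'x \<Rightarrow> real) \<Rightarrow> ('x \<Rightarrow> real) \<Rightarrow> nat \<Rightarrow> nat
     \<Rightarrow> (nat \<Rightarrow> 'x) \<Rightarrow> (nat \<Rightarrow> bool) \<Rightarrow> real" where
  "split_stat Lam G pd n1 n xs ys =
     Sup {(1 / real (n - n1)) *
            (\<Sum>i\<in>{n1<..n}. (of_bool (ys i) - pd (xs i)) *
                 (G l (xs i) * of_bool (G l (xs i) > \<gamma>))) | \<gamma> l. 0 \<le> \<gamma> \<and> l \<in> Lam}"

definition boot_dist ::
  "'l set \<Rightarrow> ('l \<Rightarrow> 'x \<Rightarrow> real) \<Rightarrow> ('x \<Rightarrow> real) \<Rightarrow> nat \<Rightarrow> nat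
     \<Rightarrow> (nat \<Rightarrow> 'x) \<Rightarrow> real pmf" where
  "boot_dist Lam G pd n1 n xs =
     map_pmf (split_stat Lam G pd n1 n xs)
       (Pi_pmf {n1<..n} False (\<lambda>i. bernoulli_pmf (pd (xs i))))"

definition quantile_pmf :: "real pmf \<Rightarrow> real \<Rightarrow> real" where
  "quantile_pmf P \<alpha> = Inf {t. measure_pmf.prob P {s. s \<le> t} \<ge> 1 - \<alpha>}"

end

theory Submission
  imports Defs
begin

lemma quantile_aux:
  fixes P :: "real pmf"
  assumes fin: "finite (set_pmf P)" and a: "0 < \<alpha>" "\<alpha> < 1"
  defines "T \<equiv> {t. measure_pmf.prob P {s. s \<le> t} \<ge> 1 - \<alpha>}"
  shows "quantile_pmf P \<alpha> \<in> T \<and> (\<forall>t\<in>T. quantile_pmf P \<alpha> \<le> t)"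
proof -
  let ?A = "set_pmf P"
  have ne: "?A \<noteq> {}" by (rule set_pmf_not_empty)
  have key: "\<exists>t'\<in>T \<inter> ?A. t' \<le> t" if "t \<in> T" for t
  proof -
    let ?S = "{s\<in>?A. s \<le> t}"
    have "?S \<noteq> {}"
    proof
      assume e: "?S = {}"
      have "measure_pmf.prob P {s. s \<le> t} = 0"
        using e by (subst measure_pmf_zero_iff) auto
      with that a show False by (simp add: T_def)
    qed
    moreover have "finite ?S" using fin by simp
    ultimately have m: "Max ?S \<in> ?S" by (intro Max_in)
    have z: "pmf P x = 0" if "x \<le> t" "\<not> x \<le> Max ?S" for x
    proof (cases "x \<in> ?A")
      case True
      with that show ?thesis using m Max_ge[OF \<open>finite ?S\<close>, of x] by auto
    next
      case False then show ?thesis by (simp add: set_pmf_iff)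
    qed
    have "measure_pmf.prob P {s. s \<le> Max ?S} = measure_pmf.prob P {s. s \<le> t}"
      by (rule measure_prob_cong_0) (use z m in auto)
    then have "Max ?S \<in> T" using that by (simp add: T_def)
    then show ?thesis using m by blast
  qed
  have "Max ?A \<in> T"
  proof -
    have "measure_pmf.prob P {s. s \<le> Max ?A} = 1"
      by (rule measure_pmf.prob_eq_1[THEN iffD2]) (auto simp: AE_measure_pmf_iff fin)
    then show ?thesis using a by (simp add: T_def)
  qed
  then have ne2: "T \<inter> ?A \<noteq> {}" using fin ne Max_in by blast
  define m where "m = Min (T \<inter> ?A)"
  have mT: "m \<in> T \<inter> ?A" unfolding m_def using ne2 fin by (intro Min_in) auto
  have mle: "m \<le> t" if tT: "t \<in> T" for t
  proof -
    obtain t' where "t' \<in> T \<inter> ?A" "t' \<le> t" using key[OF tT] by blast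
    moreover have "m \<le> t'" unfolding m_def using \<open>t' \<in> T \<inter> ?A\<close> fin by (intro Min_le) auto
    ultimately show ?thesis by simp
  qed
  have "quantile_pmf P \<alpha> = m"
    unfolding quantile_pmf_def T_def[symmetric] using mT mle by (intro cInf_eq_minimum) auto
  then show ?thesis using mT mle by auto
qed

lemma quantile_tail:
  fixes P :: "real pmf"
  assumes fin: "finite (set_pmf P)" and a: "0 < \<alpha>" "\<alpha> < 1"
  shows "measure_pmf.prob P {s. s > quantile_pmf P \<alpha>} \<le> \<alpha>"
proof -
  let ?q = "quantile_pmf P \<alpha>"
  have q: "measure_pmf.prob P {s. s \<le> ?q} \<ge> 1 - \<alpha>" using quantile_aux[OF assms] by auto
  have "{s. s > ?q} = UNIV - {s. s \<le> ?q}" by auto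
  then have "measure_pmf.prob P {s. s > ?q} = 1 - measure_pmf.prob P {s. s \<le> ?q}"
    using measure_pmf.prob_compl[of "{s. s \<le> ?q}" P] by simp
  with q show ?thesis by simp
qed

lemma quantile_less_iff:
  fixes P :: "real pmf"
  assumes fin: "finite (set_pmf P)" and a: "0 < \<alpha>" "\<alpha> < 1"
  shows "s > quantile_pmf P \<alpha> \<longleftrightarrow> measure_pmf.prob P {t. t < s} \<ge> 1 - \<alpha>"
proof
  let ?q = "quantile_pmf P \<alpha>"
  assume "s > ?q"
  then have "{t. t \<le> ?q} \<subseteq> {t. t < s}" by auto
  then have "measure_pmf.prob P {t. t \<le> ?q} \<le> measure_pmf.prob P {t. t < s}"
    by (intro measure_pmf.finite_measure_mono) auto
  moreover have "measure_pmf.prob P {s. s \<le> ?q} \<ge> 1 - \<alpha>" using quantile_aux[OF assms] by auto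
  ultimately show "measure_pmf.prob P {t. t < s} \<ge> 1 - \<alpha>" by simp
next
  let ?q = "quantile_pmf P \<alpha>"
  let ?A = "set_pmf P"
  assume h: "measure_pmf.prob P {t. t < s} \<ge> 1 - \<alpha>"
  let ?S = "{a\<in>?A. a < s}"
  have "?S \<noteq> {}"
  proof
    assume e: "?S = {}"
    have "measure_pmf.prob P {t. t < s} = 0"
      using e by (subst measure_pmf_zero_iff) auto
    with h a show False by simp
  qed
  moreover have "finite ?S" using fin by simp
  ultimately have m: "Max ?S \<in> ?S" by (intro Max_in)
  have z: "pmf P x = 0" if "x < s" "\<not> x \<le> Max ?S" for x
  proof (cases "x \<in> ?A")
    case True
    with that show ?thesis using m Max_ge[OF \<open>finite ?S\<close>, of x] by auto
  next
    case False then show ?thesis by (simp add: set_pmf_iff)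
  qed
  have "measure_pmf.prob P {t. t \<le> Max ?S} = measure_pmf.prob P {t. t < s}"
    by (rule measure_prob_cong_0) (use z m in auto)
  with h have "?q \<le> Max ?S" using quantile_aux[OF assms] by auto
  with m show "s > ?q" by auto
qed

lemma ennreal_bern_mono:
  fixes x y :: ennreal and a c :: real
  assumes "y \<le> x" "0 \<le> a" "a \<le> c" "c \<le> 1"
  shows "x * ennreal a + y * ennreal (1 - a) \<le> x * ennreal c + y * ennreal (1 - c)"
proof -
  have e1: "ennreal (1 - a) = ennreal (c - a) + ennreal (1 - c)"
    using assms by (subst ennreal_plus[symmetric]) auto
  have e2: "ennreal c = ennreal a + ennreal (c - a)"
    using assms by (subst ennreal_plus[symmetric]) auto
  have "x * ennreal a + y * ennreal (1 - a) = x * ennreal a + y * ennreal (c - a) + y * ennreal (1 - c)"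
    by (simp add: e1 distrib_left add.assoc)
  also have "\<dots> \<le> x * ennreal a + x * ennreal (c - a) + y * ennreal (1 - c)"
    using assms by (intro add_mono mult_right_mono order_refl) auto
  also have "\<dots> = x * ennreal c + y * ennreal (1 - c)"
    by (simp add: e2 distrib_left)
  finally show ?thesis .
qed

lemma Pi_pmf_dominance:
  fixes f :: "('i \<Rightarrow> bool) \<Rightarrow> ennreal"
  assumes "finite N" "\<forall>j\<in>N. 0 \<le> a j \<and> a j \<le> c j \<and> c j \<le> 1"
    and "\<And>h h'. (\<And>j. h j \<Longrightarrow> h' j) \<Longrightarrow> f h \<le> f h'"
  shows "(\<integral>\<^sup>+h. f h \<partial>Pi_pmf N False (\<lambda>j. bernoulli_pmf (a j)))
           \<le> (\<integral>\<^sup>+h. f h \<partial>Pi_pmf N False (\<lambda>j. bernoulli_pmf (c j)))"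
  using assms
proof (induction N arbitrary: f rule: finite_induct)
  case empty
  then show ?case by simp
next
  case (insert i N)
  define Fa where "Fa y = (\<integral>\<^sup>+g. f (g(i:=y)) \<partial>Pi_pmf N False (\<lambda>j. bernoulli_pmf (a j)))" for y
  define Fc where "Fc y = (\<integral>\<^sup>+g. f (g(i:=y)) \<partial>Pi_pmf N False (\<lambda>j. bernoulli_pmf (c j)))" for y
  have mono': "f (h(i:=y)) \<le> f (h'(i:=y))" if "\<And>j. h j \<Longrightarrow> h' j" for h h' y
    by (rule insert.prems(2)) (use that in auto)
  have FaFc: "Fa y \<le> Fc y" for y
    unfolding Fa_def Fc_def by (rule insert.IH) (use insert.prems mono' in auto)
  have FcTF: "Fc False \<le> Fc True"
    unfolding Fc_def by (intro nn_integral_mono insert.prems(2)) auto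
  have ai: "0 \<le> a i" "a i \<le> c i" "c i \<le> 1" using insert.prems(1) by auto
  have "(\<integral>\<^sup>+h. f h \<partial>Pi_pmf (insert i N) False (\<lambda>j. bernoulli_pmf (a j)))
        = (\<integral>\<^sup>+y. Fa y \<partial>bernoulli_pmf (a i))"
    by (simp add: Pi_pmf_insert[OF insert.hyps] nn_integral_pair_pmf' Fa_def)
  also have "\<dots> \<le> (\<integral>\<^sup>+y. Fc y \<partial>bernoulli_pmf (a i))"
    by (intro nn_integral_mono FaFc)
  also have "\<dots> = Fc True * ennreal (a i) + Fc False * ennreal (1 - a i)"
    using ai by simp
  also have "\<dots> \<le> Fc True * ennreal (c i) + Fc False * ennreal (1 - c i)"
    using ai FcTF by (intro ennreal_bern_mono) auto
  also have "\<dots> = (\<integral>\<^sup>+y. Fc y \<partial>bernoulli_pmf (c i))"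
    using ai by simp
  also have "\<dots> = (\<integral>\<^sup>+h. f h \<partial>Pi_pmf (insert i N) False (\<lambda>j. bernoulli_pmf (c j)))"
    by (simp add: Pi_pmf_insert[OF insert.hyps] nn_integral_pair_pmf' Fc_def)
  finally show ?case .
qed

lemma Pi_pmf_prob_sum:
  fixes p :: "'i \<Rightarrow> bool pmf"
  assumes fin: "finite N" and R: "\<And>h h'. (\<And>j. j \<in> N \<Longrightarrow> h j = h' j) \<Longrightarrow> R h = R h'"
  shows "measure_pmf.prob (Pi_pmf N False p) {h. R h}
         = (\<Sum>ys\<in>PiE N (\<lambda>_. UNIV). (\<Prod>j\<in>N. pmf (p j) (ys j)) * of_bool (R ys))"
proof -
  let ?D = "PiE_dflt N False (\<lambda>_. UNIV)"
  let ?e = "\<lambda>h x. if x \<in> N then h x else False"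
  have finD: "finite ?D" using fin by auto
  have "measure_pmf.prob (Pi_pmf N False p) {h. R h} = measure_pmf.prob (Pi_pmf N False p) ({h. R h} \<inter> ?D)"
    by (rule measure_prob_cong_0) (auto simp: pmf_Pi fin PiE_dflt_def)
  also have "\<dots> = sum (pmf (Pi_pmf N False p)) ({h. R h} \<inter> ?D)"
    using finD by (intro measure_measure_pmf_finite) auto
  also have "\<dots> = (\<Sum>h\<in>?D. pmf (Pi_pmf N False p) h * of_bool (R h))"
  proof -
    have "{h. R h} \<inter> ?D = {h\<in>?D. R h}" by auto
    then show ?thesis using finD by (simp add: sum.inter_filter of_bool_def; intro sum.cong; simp)
  qed
  also have "\<dots> = (\<Sum>h\<in>?D. (\<Prod>j\<in>N. pmf (p j) (h j)) * of_bool (R h))"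
    by (intro sum.cong refl, subst pmf_Pi') (auto simp: fin PiE_dflt_def)
  also have "\<dots> = (\<Sum>ys\<in>PiE N (\<lambda>_. UNIV). (\<Prod>j\<in>N. pmf (p j) (?e ys j)) * of_bool (R (?e ys)))"
  proof (rule sum.reindex_bij_betw[symmetric])
    show "bij_betw ?e (PiE N (\<lambda>_. UNIV)) ?D"
      unfolding bij_betw_def
    proof
      show "inj_on ?e (PiE N (\<lambda>_. UNIV))"
      proof (rule inj_onI)
        fix x y assume "x \<in> PiE N (\<lambda>_. UNIV)" "y \<in> PiE N (\<lambda>_. UNIV)" "?e x = ?e y"
        then show "x = y" by (intro PiE_ext[of x N "\<lambda>_. UNIV"]) (auto simp: fun_eq_iff, metis+)
      qed
    qed (rule dflt_image_PiE)
  qed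
  also have "\<dots> = (\<Sum>ys\<in>PiE N (\<lambda>_. UNIV). (\<Prod>j\<in>N. pmf (p j) (ys j)) * of_bool (R ys))"
    by (intro sum.cong refl arg_cong2[where f="(*)"] prod.cong arg_cong[where f=of_bool] R) auto
  finally show ?thesis .
qed

definition sval where
  "sval G pd n1 n xs ys \<gamma> l = (1 / real (n - n1)) *
     (\<Sum>i\<in>{n1<..n}. (of_bool (ys i) - pd (xs i)) * (G l (xs i) * of_bool (G l (xs i) > \<gamma>)))"

lemma split_stat_sval:
  "split_stat Lam G pd n1 n xs ys = Sup {sval G pd n1 n xs ys \<gamma> l | \<gamma> l. 0 \<le> \<gamma> \<and> l \<in> Lam}"
  unfolding split_stat_def sval_def ..

lemma split_stat_cong:
  assumes "\<And>i. i \<in> {n1<..n} \<Longrightarrow> xs i = xs' i" "\<And>i. i \<in> {n1<..n} \<Longrightarrow> ys i = ys' i"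
  shows "split_stat Lam G pd n1 n xs ys = split_stat Lam G pd n1 n xs' ys'"
proof -
  have "sval G pd n1 n xs ys \<gamma> l = sval G pd n1 n xs' ys' \<gamma> l" for \<gamma> l
    unfolding sval_def using assms by (intro arg_cong2[where f="(*)"] sum.cong refl) auto
  then show ?thesis unfolding split_stat_sval by simp
qed

lemma unif_bound:
  fixes G :: "'l \<Rightarrow> 'x \<Rightarrow> real"
  assumes "finite Lam" "\<And>l. l \<in> Lam \<Longrightarrow> bounded (range (G l))"
  shows "\<exists>K. \<forall>l\<in>Lam. \<forall>x. \<bar>G l x\<bar> \<le> K"
proof -
  have "bounded (\<Union>l\<in>Lam. range (G l))" using assms by (intro bounded_UN) auto
  then obtain K where "\<forall>y\<in>(\<Union>l\<in>Lam. range (G l)). norm y \<le> K" unfolding bounded_iff by blast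
  then show ?thesis by auto
qed

lemma sval_bound:
  assumes K: "\<And>x. \<bar>G l x\<bar> \<le> K" and pd: "\<And>x. 0 \<le> pd x \<and> pd x \<le> 1"
  shows "\<bar>sval G pd n1 n xs ys \<gamma> l\<bar> \<le> real (n - n1) * K"
proof -
  have "\<bar>\<Sum>i\<in>{n1<..n}. (of_bool (ys i) - pd (xs i)) * (G l (xs i) * of_bool (G l (xs i) > \<gamma>))\<bar>
        \<le> (\<Sum>i\<in>{n1<..n}. K)"
  proof (rule order_trans[OF sum_abs], intro sum_mono)
    fix i
    have "\<bar>of_bool (ys i) - pd (xs i)\<bar> \<le> 1" using pd[of "xs i"] by (auto simp: of_bool_def)
    moreover have "\<bar>G l (xs i) * of_bool (G l (xs i) > \<gamma>)\<bar> \<le> K" using K[of "xs i"] K[of undefined]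
      by (auto simp: of_bool_def)
    ultimately show "\<bar>(of_bool (ys i) - pd (xs i)) * (G l (xs i) * of_bool (G l (xs i) > \<gamma>))\<bar> \<le> K"
    proof -
      assume a1: "\<bar>of_bool (ys i) - pd (xs i)\<bar> \<le> 1" and a2: "\<bar>G l (xs i) * of_bool (G l (xs i) > \<gamma>)\<bar> \<le> K"
      have "\<bar>of_bool (ys i) - pd (xs i)\<bar> * \<bar>G l (xs i) * of_bool (G l (xs i) > \<gamma>)\<bar>
            \<le> 1 * \<bar>G l (xs i) * of_bool (G l (xs i) > \<gamma>)\<bar>"
        by (rule mult_right_mono[OF a1 abs_ge_zero])
      then show ?thesis using a2 by (subst abs_mult) linarith
    qed
  qed
  also have "\<dots> = real (n - n1) * K" by simp
  finally have s: "\<bar>\<Sum>i\<in>{n1<..n}. (of_bool (ys i) - pd (xs i)) * (G l (xs i) * of_bool (G l (xs i) > \<gamma>))\<bar>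
        \<le> real (n - n1) * K" .
  have "\<bar>1 / real (n - n1)\<bar> \<le> 1" by (cases "n - n1") auto
  moreover have "0 \<le> real (n - n1) * K" using s by linarith
  ultimately have "\<bar>1 / real (n - n1)\<bar> * \<bar>\<Sum>i\<in>{n1<..n}. (of_bool (ys i) - pd (xs i)) * (G l (xs i) * of_bool (G l (xs i) > \<gamma>))\<bar>
     \<le> 1 * (real (n - n1) * K)"
    by (intro mult_mono s) auto
  then show ?thesis by (simp only: sval_def abs_mult mult_1)
qed

lemma sval_mono:
  assumes pd: "\<And>x. 0 \<le> pd x \<and> pd x \<le> 1" and "0 \<le> \<gamma>" and ys: "\<And>j. ys j \<Longrightarrow> ys' j"
  shows "sval G pd n1 n xs ys \<gamma> l \<le> sval G pd n1 n xs ys' \<gamma> l"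
  unfolding sval_def
proof (intro mult_left_mono sum_mono)
  fix i
  have h: "0 \<le> G l (xs i) * of_bool (G l (xs i) > \<gamma>)" using \<open>0 \<le> \<gamma>\<close> by auto
  have "of_bool (ys i) \<le> (of_bool (ys' i) :: real)" using ys[of i] by (auto simp: of_bool_def)
  then show "(of_bool (ys i) - pd (xs i)) * (G l (xs i) * of_bool (G l (xs i) > \<gamma>))
       \<le> (of_bool (ys' i) - pd (xs i)) * (G l (xs i) * of_bool (G l (xs i) > \<gamma>))"
    using h by (intro mult_right_mono) auto
qed auto

lemma split_stat_bdd:
  assumes "finite Lam" "\<And>l. l \<in> Lam \<Longrightarrow> bounded (range (G l))" and pd: "\<And>x. 0 \<le> pd x \<and> pd x \<le> 1"
  shows "bdd_above {sval G pd n1 n xs ys \<gamma> l | \<gamma> l. 0 \<le> \<gamma> \<and> l \<in> Lam}"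
proof -
  have "\<exists>K. \<forall>l\<in>Lam. \<forall>x. \<bar>G l x\<bar> \<le> K" by (rule unif_bound) (use assms in auto)
  then obtain K where K: "\<And>l x. l \<in> Lam \<Longrightarrow> \<bar>G l x\<bar> \<le> K" by blast
  show ?thesis
  proof (rule bdd_aboveI[of _ "real (n - n1) * K"])
    fix v assume "v \<in> {sval G pd n1 n xs ys \<gamma> l | \<gamma> l. 0 \<le> \<gamma> \<and> l \<in> Lam}"
    then obtain \<gamma> l where v: "v = sval G pd n1 n xs ys \<gamma> l" "l \<in> Lam" by blast
    have "\<bar>sval G pd n1 n xs ys \<gamma> l\<bar> \<le> real (n - n1) * K"
      by (rule sval_bound) (use K v pd in auto)
    then show "v \<le> real (n - n1) * K" using v by linarith
  qed
qed

lemma split_stat_mono: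
  assumes "finite Lam" "Lam \<noteq> {}" "\<And>l. l \<in> Lam \<Longrightarrow> bounded (range (G l))"
    and pd: "\<And>x. 0 \<le> pd x \<and> pd x \<le> 1" and ys: "\<And>j. ys j \<Longrightarrow> ys' j"
  shows "split_stat Lam G pd n1 n xs ys \<le> split_stat Lam G pd n1 n xs ys'"
  unfolding split_stat_sval
proof (rule cSup_mono)
  from assms(2) obtain l0 where l0: "l0 \<in> Lam" by blast
  have "sval G pd n1 n xs ys 0 l0 \<in> {sval G pd n1 n xs ys \<gamma> l |\<gamma> l. 0 \<le> \<gamma> \<and> l \<in> Lam}"
    using l0 by (intro CollectI exI conjI refl) auto
  then show "{sval G pd n1 n xs ys \<gamma> l |\<gamma> l. 0 \<le> \<gamma> \<and> l \<in> Lam} \<noteq> {}" by blast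
  show "bdd_above {sval G pd n1 n xs ys' \<gamma> l |\<gamma> l. 0 \<le> \<gamma> \<and> l \<in> Lam}"
    by (rule split_stat_bdd[OF assms(1,3) pd])
  fix b assume "b \<in> {sval G pd n1 n xs ys \<gamma> l |\<gamma> l. 0 \<le> \<gamma> \<and> l \<in> Lam}"
  then obtain \<gamma> l where bl: "b = sval G pd n1 n xs ys \<gamma> l" "0 \<le> \<gamma>" "l \<in> Lam" by blast
  have "sval G pd n1 n xs ys' \<gamma> l \<in> {sval G pd n1 n xs ys' \<gamma> l |\<gamma> l. 0 \<le> \<gamma> \<and> l \<in> Lam}"
    using bl by (intro CollectI exI conjI refl) auto
  moreover have "b \<le> sval G pd n1 n xs ys' \<gamma> l" unfolding bl(1) by (rule sval_mono[OF pd bl(2) ys])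
  ultimately show "\<exists>a\<in>{sval G pd n1 n xs ys' \<gamma> l |\<gamma> l. 0 \<le> \<gamma> \<and> l \<in> Lam}. b \<le> a" by blast
qed

lemma rat_threshold:
  fixes F :: "real set" and \<gamma> :: real
  assumes "finite F"
  obtains r where "r \<in> \<rat>" "\<gamma> \<le> r" "\<And>a. a \<in> F \<Longrightarrow> a > \<gamma> \<longleftrightarrow> a > r"
proof -
  define m where "m = Min (insert (\<gamma> + 1) {a\<in>F. a > \<gamma>})"
  have fin: "finite (insert (\<gamma> + 1) {a\<in>F. a > \<gamma>})" using assms by simp
  have "m \<in> insert (\<gamma> + 1) {a\<in>F. a > \<gamma>}" unfolding m_def using fin by (intro Min_in) auto
  then have "\<gamma> < m" by auto
  then obtain r where r: "r \<in> \<rat>" "\<gamma> < r" "r < m" using Rats_dense_in_real by blast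
  have "a > \<gamma> \<longleftrightarrow> a > r" if "a \<in> F" for a
  proof
    assume "a > \<gamma>"
    then have "m \<le> a" unfolding m_def using fin that by (intro Min_le) auto
    then show "a > r" using r by simp
  qed (use r in simp)
  then show ?thesis using that r by auto
qed

lemma split_stat_SUP:
  "split_stat Lam G pd n1 n xs ys = (SUP rl\<in>(\<rat> \<inter> {0..}) \<times> Lam. sval G pd n1 n xs ys (fst rl) (snd rl))"
proof -
  have "{sval G pd n1 n xs ys \<gamma> l | \<gamma> l. 0 \<le> \<gamma> \<and> l \<in> Lam}
        = (\<lambda>rl. sval G pd n1 n xs ys (fst rl) (snd rl)) ` ((\<rat> \<inter> {0..}) \<times> Lam)"
  proof (intro equalityI subsetI)
    fix v assume "v \<in> {sval G pd n1 n xs ys \<gamma> l | \<gamma> l. 0 \<le> \<gamma> \<and> l \<in> Lam}"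
    then obtain \<gamma> l where v: "v = sval G pd n1 n xs ys \<gamma> l" "0 \<le> \<gamma>" "l \<in> Lam" by blast
    obtain r where r: "r \<in> \<rat>" "\<gamma> \<le> r" "\<And>a. a \<in> (\<lambda>i. G l (xs i)) ` {n1<..n} \<Longrightarrow> a > \<gamma> \<longleftrightarrow> a > r"
      using rat_threshold[of "(\<lambda>i. G l (xs i)) ` {n1<..n}" \<gamma>] by blast
    have "sval G pd n1 n xs ys \<gamma> l = sval G pd n1 n xs ys r l"
      unfolding sval_def using r(3) by (intro arg_cong2[where f="(*)"] sum.cong refl) auto
    then show "v \<in> (\<lambda>rl. sval G pd n1 n xs ys (fst rl) (snd rl)) ` ((\<rat> \<inter> {0..}) \<times> Lam)"
      using v r by (intro image_eqI[where x="(r, l)"]) auto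
  next
    fix v assume "v \<in> (\<lambda>rl. sval G pd n1 n xs ys (fst rl) (snd rl)) ` ((\<rat> \<inter> {0..}) \<times> Lam)"
    then obtain r l where "v = sval G pd n1 n xs ys r l" "0 \<le> r" "l \<in> Lam" by auto
    then show "v \<in> {sval G pd n1 n xs ys \<gamma> l | \<gamma> l. 0 \<le> \<gamma> \<and> l \<in> Lam}" by blast
  qed
  then show ?thesis unfolding split_stat_sval by (rule arg_cong[where f=Sup])
qed

lemma cond_nn:
  fixes M :: "'a measure" and Mx :: "'x measure"
  assumes M: "prob_space M" and X0[measurable]: "X0 \<in> measurable M Mx"
    and S: "S \<in> sets M" and q[measurable]: "q \<in> borel_measurable Mx" and q01: "\<And>x. 0 \<le> q x \<and> q x \<le> 1"
    and c: "\<forall>B\<in>sets Mx. measure M (S \<inter> X0 -` B) = (\<integral>\<omega>. indicator B (X0 \<omega>) * q (X0 \<omega>) \<partial>M)"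
    and f[measurable]: "f \<in> borel_measurable Mx"
  shows "(\<integral>\<^sup>+\<omega>. indicator S \<omega> * f (X0 \<omega>) \<partial>M) = (\<integral>\<^sup>+\<omega>. ennreal (q (X0 \<omega>)) * f (X0 \<omega>) \<partial>M)"
proof -
  interpret prob_space M by (rule M)
  define N1 where "N1 = distr (density M (indicator S)) Mx X0"
  define N2 where "N2 = distr (density M (\<lambda>\<omega>. ennreal (q (X0 \<omega>)))) Mx X0"
  have S'[measurable]: "S \<in> sets M" by (rule S)
  have "N1 = N2"
  proof (rule measure_eqI)
    show "sets N1 = sets N2" by (simp add: N1_def N2_def)
    fix B assume "B \<in> sets N1"
    then have B[measurable]: "B \<in> sets Mx" by (simp add: N1_def)
    have sub: "S \<inter> X0 -` B = S \<inter> (X0 -` B \<inter> space M)" using sets.sets_into_space[OF S] by auto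
    have "emeasure N1 B = (\<integral>\<^sup>+\<omega>. indicator S \<omega> * indicator (X0 -` B \<inter> space M) \<omega> \<partial>M)"
      unfolding N1_def by (simp add: emeasure_distr emeasure_density)
    also have "\<dots> = (\<integral>\<^sup>+\<omega>. indicator (S \<inter> X0 -` B) \<omega> \<partial>M)"
      by (intro nn_integral_cong) (auto split: split_indicator)
    also have "\<dots> = emeasure M (S \<inter> X0 -` B)"
      using sub by (simp add: sets.Int)
    also have "\<dots> = ennreal (measure M (S \<inter> X0 -` B))"
      by (simp add: emeasure_eq_measure)
    also have "\<dots> = ennreal (\<integral>\<omega>. indicator B (X0 \<omega>) * q (X0 \<omega>) \<partial>M)"
      using c B by simp
    also have "\<dots> = (\<integral>\<^sup>+\<omega>. ennreal (indicator B (X0 \<omega>) * q (X0 \<omega>)) \<partial>M)"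
    proof (rule nn_integral_eq_integral[symmetric])
      show "integrable M (\<lambda>\<omega>. indicator B (X0 \<omega>) * q (X0 \<omega>))"
        by (rule integrable_const_bound[where B=1]) (use q01 in \<open>auto split: split_indicator\<close>)
    qed (use q01 in \<open>auto split: split_indicator\<close>)
    also have "\<dots> = emeasure N2 B"
      unfolding N2_def
      by (simp add: emeasure_distr emeasure_density, intro nn_integral_cong)
         (auto split: split_indicator simp: mult.commute)
    finally show "emeasure N1 B = emeasure N2 B" .
  qed
  have "(\<integral>\<^sup>+\<omega>. indicator S \<omega> * f (X0 \<omega>) \<partial>M) = (\<integral>\<^sup>+x. f x \<partial>N1)"
    unfolding N1_def by (simp add: nn_integral_distr nn_integral_density)
  also have "\<dots> = (\<integral>\<^sup>+x. f x \<partial>N2)" using \<open>N1 = N2\<close> by simp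
  also have "\<dots> = (\<integral>\<^sup>+\<omega>. ennreal (q (X0 \<omega>)) * f (X0 \<omega>) \<partial>M)"
    unfolding N2_def by (simp add: nn_integral_distr nn_integral_density)
  finally show ?thesis .
qed

lemma Q_formula:
  fixes M :: "'a measure" and Mx :: "'x measure"
  assumes M: "prob_space M" and X0[measurable]: "X0 \<in> measurable M Mx"
    and Y0[measurable]: "Y0 \<in> measurable M (count_space UNIV)"
    and p0[measurable]: "p0 \<in> borel_measurable Mx" and p01: "\<And>x. 0 \<le> p0 x \<and> p0 x \<le> 1"
    and cond: "\<forall>B\<in>sets Mx. measure M {\<omega>\<in>space M. X0 \<omega> \<in> B \<and> Y0 \<omega>}
                 = (\<integral>\<omega>. indicator B (X0 \<omega>) * p0 (X0 \<omega>) \<partial>M)"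
    and h[measurable]: "h \<in> borel_measurable (Mx \<Otimes>\<^sub>M count_space UNIV)"
  shows "(\<integral>\<^sup>+z. h z \<partial>distr M (Mx \<Otimes>\<^sub>M count_space UNIV) (\<lambda>\<omega>. (X0 \<omega>, Y0 \<omega>)))
       = (\<integral>\<^sup>+x. ennreal (p0 x) * h (x, True) + ennreal (1 - p0 x) * h (x, False) \<partial>distr M Mx X0)"
proof -
  interpret prob_space M by (rule M)
  define S1 where "S1 = {\<omega>\<in>space M. Y0 \<omega>}"
  define S0 where "S0 = {\<omega>\<in>space M. \<not> Y0 \<omega>}"
  have S1[measurable]: "S1 \<in> sets M" unfolding S1_def by measurable
  have S0[measurable]: "S0 \<in> sets M" unfolding S0_def by measurable
  have c1: "\<forall>B\<in>sets Mx. measure M (S1 \<inter> X0 -` B) = (\<integral>\<omega>. indicator B (X0 \<omega>) * p0 (X0 \<omega>) \<partial>M)"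
  proof
    fix B assume "B \<in> sets Mx"
    moreover have "S1 \<inter> X0 -` B = {\<omega>\<in>space M. X0 \<omega> \<in> B \<and> Y0 \<omega>}" unfolding S1_def by auto
    ultimately show "measure M (S1 \<inter> X0 -` B) = (\<integral>\<omega>. indicator B (X0 \<omega>) * p0 (X0 \<omega>) \<partial>M)"
      using cond by simp
  qed
  have c0: "\<forall>B\<in>sets Mx. measure M (S0 \<inter> X0 -` B) = (\<integral>\<omega>. indicator B (X0 \<omega>) * (1 - p0 (X0 \<omega>)) \<partial>M)"
  proof
    fix B assume B[measurable]: "B \<in> sets Mx"
    have e: "S0 \<inter> X0 -` B = (X0 -` B \<inter> space M) - (S1 \<inter> X0 -` B)" unfolding S0_def S1_def by auto
    have m1[measurable]: "S1 \<inter> X0 -` B \<in> sets M"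
    proof -
      have "S1 \<inter> X0 -` B = S1 \<inter> (X0 -` B \<inter> space M)" unfolding S1_def by auto
      then show ?thesis by simp
    qed
    have "measure M (S0 \<inter> X0 -` B) = measure M (X0 -` B \<inter> space M) - measure M (S1 \<inter> X0 -` B)"
      unfolding e by (rule finite_measure_Diff) (simp_all add: m1, auto simp: S1_def)
    also have "measure M (X0 -` B \<inter> space M) = (\<integral>\<omega>. indicator B (X0 \<omega>) \<partial>M)"
    proof -
      have "(\<integral>\<omega>. indicator B (X0 \<omega>) \<partial>M) = (\<integral>\<omega>. indicator (X0 -` B \<inter> space M) \<omega> \<partial>M)"
        by (intro Bochner_Integration.integral_cong) (auto split: split_indicator)
      also have "\<dots> = measure M (X0 -` B \<inter> space M)" by simp
      finally show ?thesis by simp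
    qed
    also have "measure M (S1 \<inter> X0 -` B) = (\<integral>\<omega>. indicator B (X0 \<omega>) * p0 (X0 \<omega>) \<partial>M)"
      using c1 B by simp
    also have "(\<integral>\<omega>. indicator B (X0 \<omega>) \<partial>M) - (\<integral>\<omega>. indicator B (X0 \<omega>) * p0 (X0 \<omega>) \<partial>M)
        = (\<integral>\<omega>. indicator B (X0 \<omega>) - indicator B (X0 \<omega>) * p0 (X0 \<omega>) \<partial>M)"
    proof (rule Bochner_Integration.integral_diff[symmetric])
      show "integrable M (\<lambda>\<omega>. indicator B (X0 \<omega>) :: real)"
        by (rule integrable_const_bound[where B=1]) (auto split: split_indicator)
      show "integrable M (\<lambda>\<omega>. indicator B (X0 \<omega>) * p0 (X0 \<omega>))"
        by (rule integrable_const_bound[where B=1]) (use p01 in \<open>auto split: split_indicator\<close>)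
    qed
    also have "\<dots> = (\<integral>\<omega>. indicator B (X0 \<omega>) * (1 - p0 (X0 \<omega>)) \<partial>M)"
      by (simp add: algebra_simps)
    finally show "measure M (S0 \<inter> X0 -` B) = (\<integral>\<omega>. indicator B (X0 \<omega>) * (1 - p0 (X0 \<omega>)) \<partial>M)" .
  qed
  have hT[measurable]: "(\<lambda>x. h (x, True)) \<in> borel_measurable Mx" by measurable
  have hF[measurable]: "(\<lambda>x. h (x, False)) \<in> borel_measurable Mx" by measurable
  have q0: "(\<lambda>x. 1 - p0 x) \<in> borel_measurable Mx" by measurable
  have "(\<integral>\<^sup>+z. h z \<partial>distr M (Mx \<Otimes>\<^sub>M count_space UNIV) (\<lambda>\<omega>. (X0 \<omega>, Y0 \<omega>)))
        = (\<integral>\<^sup>+\<omega>. h (X0 \<omega>, Y0 \<omega>) \<partial>M)"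
    by (simp add: nn_integral_distr)
  also have "\<dots> = (\<integral>\<^sup>+\<omega>. indicator S1 \<omega> * h (X0 \<omega>, True) + indicator S0 \<omega> * h (X0 \<omega>, False) \<partial>M)"
    by (intro nn_integral_cong) (auto simp: S1_def S0_def split: split_indicator)
  also have "\<dots> = (\<integral>\<^sup>+\<omega>. indicator S1 \<omega> * h (X0 \<omega>, True) \<partial>M) + (\<integral>\<^sup>+\<omega>. indicator S0 \<omega> * h (X0 \<omega>, False) \<partial>M)"
    by (intro nn_integral_add) auto
  also have "(\<integral>\<^sup>+\<omega>. indicator S1 \<omega> * h (X0 \<omega>, True) \<partial>M) = (\<integral>\<^sup>+\<omega>. ennreal (p0 (X0 \<omega>)) * h (X0 \<omega>, True) \<partial>M)"
    by (rule cond_nn[OF M X0 S1 p0 p01 c1 hT])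
  also have "(\<integral>\<^sup>+\<omega>. indicator S0 \<omega> * h (X0 \<omega>, False) \<partial>M) = (\<integral>\<^sup>+\<omega>. ennreal (1 - p0 (X0 \<omega>)) * h (X0 \<omega>, False) \<partial>M)"
    by (rule cond_nn[OF M X0 S0 q0 _ c0 hF]) (use p01 in auto)
  also have "(\<integral>\<^sup>+\<omega>. ennreal (p0 (X0 \<omega>)) * h (X0 \<omega>, True) \<partial>M) + (\<integral>\<^sup>+\<omega>. ennreal (1 - p0 (X0 \<omega>)) * h (X0 \<omega>, False) \<partial>M)
      = (\<integral>\<^sup>+\<omega>. ennreal (p0 (X0 \<omega>)) * h (X0 \<omega>, True) + ennreal (1 - p0 (X0 \<omega>)) * h (X0 \<omega>, False) \<partial>M)"
    by (intro nn_integral_add[symmetric]) auto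
  also have "\<dots> = (\<integral>\<^sup>+x. ennreal (p0 x) * h (x, True) + ennreal (1 - p0 x) * h (x, False) \<partial>distr M Mx X0)"
    by (simp add: nn_integral_distr)
  finally show ?thesis .
qed

definition wt :: "real \<Rightarrow> bool \<Rightarrow> real" where
  "wt a b = of_bool b * a + of_bool (\<not> b) * (1 - a)"

lemma wt_nonneg: "0 \<le> a \<Longrightarrow> a \<le> 1 \<Longrightarrow> 0 \<le> wt a b"
  by (cases b) (auto simp: wt_def)

lemma wt_pmf: "0 \<le> a \<Longrightarrow> a \<le> 1 \<Longrightarrow> pmf (bernoulli_pmf a) b = wt a b"
  by (cases b) (auto simp: wt_def)

lemma decomp:
  fixes Q :: "('x \<times> bool) measure" and PX :: "'x measure" and p :: "'x \<Rightarrow> real" and N :: "nat set"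
  assumes Qp: "prob_space Q" and PXp: "prob_space PX"
    and sQ: "sets Q = sets (PX \<Otimes>\<^sub>M count_space UNIV)"
    and p[measurable]: "p \<in> borel_measurable PX" and p01: "\<And>x. 0 \<le> p x \<and> p x \<le> 1"
    and hQ: "\<And>h. h \<in> borel_measurable Q \<Longrightarrow>
       (\<integral>\<^sup>+z. h z \<partial>Q) = (\<integral>\<^sup>+x. ennreal (p x) * h (x, True) + ennreal (1 - p x) * h (x, False) \<partial>PX)"
    and N: "finite N"
  shows "H \<in> borel_measurable (PiM N (\<lambda>_. Q)) \<Longrightarrow>
     (\<integral>\<^sup>+z. H z \<partial>PiM N (\<lambda>_. Q)) = (\<integral>\<^sup>+xs. (\<Sum>ys\<in>PiE N (\<lambda>_. UNIV).
        ennreal (\<Prod>j\<in>N. wt (p (xs j)) (ys j)) * H (\<lambda>j\<in>N. (xs j, ys j))) \<partial>PiM N (\<lambda>_. PX))"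
  using N
proof (induction N arbitrary: H rule: finite_induct)
  case empty
  then show ?case by (simp add: PiM_empty nn_integral_count_space_finite)
next
  case (insert i N)
  interpret Qs: product_sigma_finite "\<lambda>_::nat. Q"
    unfolding product_sigma_finite_def using prob_space_imp_sigma_finite[OF Qp] by simp
  interpret Xs: product_sigma_finite "\<lambda>_::nat. PX"
    unfolding product_sigma_finite_def using prob_space_imp_sigma_finite[OF PXp] by simp
  interpret PX: prob_space PX by (rule PXp)
  have pairQ: "(\<lambda>x. (x, b)) \<in> measurable PX Q" for b
    by (subst measurable_cong_sets[OF refl sQ]) measurable
  have H[measurable]: "H \<in> borel_measurable (PiM (insert i N) (\<lambda>_. Q))" by (rule insert.prems)
  have upd: "(\<lambda>(z, x). z(i := (x, b))) \<in> measurable (PiM N (\<lambda>_. Q) \<Otimes>\<^sub>M PX) (PiM (insert i N) (\<lambda>_. Q))" for b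
  proof -
    have "(\<lambda>(z, x). (z, (x, b))) \<in> measurable (PiM N (\<lambda>_. Q) \<Otimes>\<^sub>M PX) (PiM N (\<lambda>_. Q) \<Otimes>\<^sub>M Q)"
      using pairQ[of b] by measurable
    from measurable_comp[OF this measurable_add_dim[of i N "\<lambda>_. Q"]]
    show ?thesis by (simp add: comp_def case_prod_beta')
  qed
  define H' where "H' z = (\<integral>\<^sup>+x. ennreal (p x) * H (z(i := (x, True))) + ennreal (1 - p x) * H (z(i := (x, False))) \<partial>PX)" for z
  have H'm: "H' \<in> borel_measurable (PiM N (\<lambda>_. Q))"
  proof -
    have "(\<lambda>(z, x). ennreal (p x) * H (z(i := (x, True))) + ennreal (1 - p x) * H (z(i := (x, False))))
            \<in> borel_measurable (PiM N (\<lambda>_. Q) \<Otimes>\<^sub>M PX)"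
      using measurable_comp[OF upd[of True] H] measurable_comp[OF upd[of False] H]
      by (simp add: comp_def case_prod_beta') measurable
    then show ?thesis unfolding H'_def
      by (intro sigma_finite_measure.borel_measurable_nn_integral[OF prob_space_imp_sigma_finite[OF PXp]]) (simp add: case_prod_beta')
  qed
  have mapm: "(\<lambda>xs. \<lambda>j\<in>A. (xs j, ys j)) \<in> measurable (PiM A (\<lambda>_. PX)) (PiM A (\<lambda>_. Q))" for A and ys :: "nat \<Rightarrow> bool"
  proof (rule measurable_restrict)
    fix j assume j: "j \<in> A"
    show "(\<lambda>xs. (xs j, ys j)) \<in> measurable (PiM A (\<lambda>_. PX)) Q"
      using measurable_compose[OF measurable_component_singleton[OF j, of "\<lambda>_. PX"] pairQ[of "ys j"]] by simp
  qed
  have "(\<integral>\<^sup>+z. H z \<partial>PiM (insert i N) (\<lambda>_. Q)) = (\<integral>\<^sup>+z. (\<integral>\<^sup>+y. H (z(i := y)) \<partial>Q) \<partial>PiM N (\<lambda>_. Q))"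
    by (rule Qs.product_nn_integral_insert[OF insert.hyps H])
  also have "\<dots> = (\<integral>\<^sup>+z. H' z \<partial>PiM N (\<lambda>_. Q))"
  proof (intro nn_integral_cong)
    fix z assume z: "z \<in> space (PiM N (\<lambda>_. Q))"
    have "(\<lambda>y. H (z(i := y))) \<in> borel_measurable Q"
      using measurable_comp[OF measurable_component_update[OF z insert.hyps(2)] H] by (simp add: comp_def)
    then show "(\<integral>\<^sup>+y. H (z(i := y)) \<partial>Q) = H' z" unfolding H'_def by (rule hQ)
  qed
  also have "\<dots> = (\<integral>\<^sup>+xs. (\<Sum>ys\<in>PiE N (\<lambda>_. UNIV).
        ennreal (\<Prod>j\<in>N. wt (p (xs j)) (ys j)) * H' (\<lambda>j\<in>N. (xs j, ys j))) \<partial>PiM N (\<lambda>_. PX))"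
    by (rule insert.IH[OF H'm])
  also have "\<dots> = (\<integral>\<^sup>+xs. (\<integral>\<^sup>+x. (\<Sum>ys\<in>PiE (insert i N) (\<lambda>_. UNIV).
        ennreal (\<Prod>j\<in>insert i N. wt (p ((xs(i := x)) j)) (ys j)) * H (\<lambda>j\<in>insert i N. ((xs(i := x)) j, ys j))) \<partial>PX) \<partial>PiM N (\<lambda>_. PX))"
  proof (intro nn_integral_cong)
    fix xs assume xs: "xs \<in> space (PiM N (\<lambda>_. PX))"
    let ?zz = "\<lambda>ys. \<lambda>j\<in>N. (xs j, ys j)"
    let ?c = "\<lambda>ys. ennreal (\<Prod>j\<in>N. wt (p (xs j)) (ys j))"
    have m1: "(\<lambda>x. ennreal (p x) * H ((?zz ys)(i := (x, True))) + ennreal (1 - p x) * H ((?zz ys)(i := (x, False))))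
              \<in> borel_measurable PX" for ys
    proof -
      have zs: "?zz ys \<in> space (PiM N (\<lambda>_. Q))"
        using measurable_space[OF mapm xs] by simp
      have "(\<lambda>y. H ((?zz ys)(i := y))) \<in> borel_measurable Q"
        using measurable_comp[OF measurable_component_update[OF zs insert.hyps(2)] H] by (simp add: comp_def)
      then have a: "(\<lambda>x. H ((?zz ys)(i := (x, b)))) \<in> borel_measurable PX" for b
        using measurable_comp[OF pairQ[of b]] by (simp add: comp_def)
      show ?thesis using a[of True] a[of False] by measurable
    qed
    have "(\<Sum>ys\<in>PiE N (\<lambda>_. UNIV). ?c ys * H' (?zz ys))
        = (\<Sum>ys\<in>PiE N (\<lambda>_. UNIV). (\<integral>\<^sup>+x. ?c ys * (ennreal (p x) * H ((?zz ys)(i := (x, True))) + ennreal (1 - p x) * H ((?zz ys)(i := (x, False)))) \<partial>PX))"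
      unfolding H'_def by (intro sum.cong refl nn_integral_cmult[symmetric] m1)
    also have "\<dots> = (\<integral>\<^sup>+x. (\<Sum>ys\<in>PiE N (\<lambda>_. UNIV). ?c ys * (ennreal (p x) * H ((?zz ys)(i := (x, True))) + ennreal (1 - p x) * H ((?zz ys)(i := (x, False))))) \<partial>PX)"
      by (rule nn_integral_sum[symmetric]) (use m1 in measurable)
    also have "\<dots> = (\<integral>\<^sup>+x. (\<Sum>ys\<in>PiE (insert i N) (\<lambda>_. UNIV).
        ennreal (\<Prod>j\<in>insert i N. wt (p ((xs(i := x)) j)) (ys j)) * H (\<lambda>j\<in>insert i N. ((xs(i := x)) j, ys j))) \<partial>PX)"
    proof (intro nn_integral_cong)
      fix x
      let ?F = "\<lambda>ys. ennreal (\<Prod>j\<in>insert i N. wt (p ((xs(i := x)) j)) (ys j)) * H (\<lambda>j\<in>insert i N. ((xs(i := x)) j, ys j))"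
      have Fr: "?F (ys(i := b)) = ennreal (wt (p x) b) * (?c ys * H ((?zz ys)(i := (x, b))))" for ys b
      proof -
        have e1: "(\<lambda>j\<in>insert i N. ((xs(i := x)) j, (ys(i := b)) j)) = (?zz ys)(i := (x, b))"
          using insert.hyps(2) by (auto simp: fun_eq_iff)
        have e2: "(\<Prod>j\<in>insert i N. wt (p ((xs(i := x)) j)) ((ys(i := b)) j)) = wt (p x) b * (\<Prod>j\<in>N. wt (p (xs j)) (ys j))"
        proof -
          have "(\<Prod>j\<in>N. wt (p ((xs(i := x)) j)) ((ys(i := b)) j)) = (\<Prod>j\<in>N. wt (p (xs j)) (ys j))"
            using insert.hyps(2) by (intro prod.cong) auto
          then show ?thesis using insert.hyps by simp
        qed
        have nn: "0 \<le> wt (p x) b" "0 \<le> (\<Prod>j\<in>N. wt (p (xs j)) (ys j))"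
          using p01 by (auto intro!: wt_nonneg prod_nonneg)
        show ?thesis unfolding e1 e2 using nn by (simp add: ennreal_mult mult.assoc)
      qed
      have "(\<Sum>ys\<in>PiE (insert i N) (\<lambda>_. UNIV). ?F ys) = (\<Sum>(b, ys)\<in>UNIV \<times> PiE N (\<lambda>_. UNIV). ?F (ys(i := b)))"
        unfolding PiE_insert_eq
        by (subst sum.reindex) (use inj_combinator[OF insert.hyps(2), of "\<lambda>_. UNIV"] in \<open>auto simp: case_prod_beta'\<close>)
      also have "\<dots> = (\<Sum>b\<in>UNIV. \<Sum>ys\<in>PiE N (\<lambda>_. UNIV). ?F (ys(i := b)))"
        by (rule sum.cartesian_product[symmetric])
      also have "\<dots> = (\<Sum>ys\<in>PiE N (\<lambda>_. UNIV). ?F (ys(i := True))) + (\<Sum>ys\<in>PiE N (\<lambda>_. UNIV). ?F (ys(i := False)))"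
        by (simp add: UNIV_bool)
      also have "\<dots> = (\<Sum>ys\<in>PiE N (\<lambda>_. UNIV). ennreal (wt (p x) True) * (?c ys * H ((?zz ys)(i := (x, True)))))
          + (\<Sum>ys\<in>PiE N (\<lambda>_. UNIV). ennreal (wt (p x) False) * (?c ys * H ((?zz ys)(i := (x, False)))))"
        by (simp only: Fr)
      also have "\<dots> = (\<Sum>ys\<in>PiE N (\<lambda>_. UNIV). ?c ys * (ennreal (p x) * H ((?zz ys)(i := (x, True))) + ennreal (1 - p x) * H ((?zz ys)(i := (x, False)))))"
        by (simp add: sum.distrib[symmetric] wt_def algebra_simps)
      finally show "(\<Sum>ys\<in>PiE N (\<lambda>_. UNIV). ?c ys * (ennreal (p x) * H ((?zz ys)(i := (x, True))) + ennreal (1 - p x) * H ((?zz ys)(i := (x, False)))))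
          = (\<Sum>ys\<in>PiE (insert i N) (\<lambda>_. UNIV). ?F ys)" by simp
    qed
    finally show "(\<Sum>ys\<in>PiE N (\<lambda>_. UNIV). ?c ys * H' (?zz ys)) = (\<integral>\<^sup>+x. (\<Sum>ys\<in>PiE (insert i N) (\<lambda>_. UNIV).
        ennreal (\<Prod>j\<in>insert i N. wt (p ((xs(i := x)) j)) (ys j)) * H (\<lambda>j\<in>insert i N. ((xs(i := x)) j, ys j))) \<partial>PX)" .
  qed
  also have "\<dots> = (\<integral>\<^sup>+xs. (\<Sum>ys\<in>PiE (insert i N) (\<lambda>_. UNIV).
        ennreal (\<Prod>j\<in>insert i N. wt (p (xs j)) (ys j)) * H (\<lambda>j\<in>insert i N. (xs j, ys j))) \<partial>PiM (insert i N) (\<lambda>_. PX))"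
  proof (rule Xs.product_nn_integral_insert[OF insert.hyps, symmetric])
    show "(\<lambda>xs. \<Sum>ys\<in>PiE (insert i N) (\<lambda>_. UNIV). ennreal (\<Prod>j\<in>insert i N. wt (p (xs j)) (ys j)) *
            H (\<lambda>j\<in>insert i N. (xs j, ys j))) \<in> borel_measurable (PiM (insert i N) (\<lambda>_. PX))"
    proof (intro borel_measurable_sum borel_measurable_times_ennreal)
      fix ys :: "nat \<Rightarrow> bool"
      show "(\<lambda>xs. H (\<lambda>j\<in>insert i N. (xs j, ys j))) \<in> borel_measurable (PiM (insert i N) (\<lambda>_. PX))"
        using measurable_comp[OF mapm H] by (simp add: comp_def)
      show "(\<lambda>xs. ennreal (\<Prod>j\<in>insert i N. wt (p (xs j)) (ys j))) \<in> borel_measurable (PiM (insert i N) (\<lambda>_. PX))"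
        unfolding wt_def by measurable
    qed
  qed
  finally show ?case .
qed

lemma pdelta_01: "0 \<le> pdelta phat \<delta> x \<and> pdelta phat \<delta> x \<le> 1"
  by (simp add: pdelta_def)

lemma Pi_pmf_prob_wt:
  assumes "finite N" "\<And>j. j \<in> N \<Longrightarrow> 0 \<le> a j \<and> a j \<le> 1"
    and R: "\<And>h h'. (\<And>j. j \<in> N \<Longrightarrow> h j = h' j) \<Longrightarrow> R h = R h'"
  shows "measure_pmf.prob (Pi_pmf N False (\<lambda>j. bernoulli_pmf (a j))) {h. R h}
         = (\<Sum>ys\<in>PiE N (\<lambda>_. UNIV). (\<Prod>j\<in>N. wt (a j) (ys j)) * of_bool (R ys))"
proof -
  have "measure_pmf.prob (Pi_pmf N False (\<lambda>j. bernoulli_pmf (a j))) {h. R h}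
     = (\<Sum>ys\<in>PiE N (\<lambda>_. UNIV). (\<Prod>j\<in>N. pmf (bernoulli_pmf (a j)) (ys j)) * of_bool (R ys))"
    by (rule Pi_pmf_prob_sum[OF assms(1) R])
  also have "\<dots> = (\<Sum>ys\<in>PiE N (\<lambda>_. UNIV). (\<Prod>j\<in>N. wt (a j) (ys j)) * of_bool (R ys))"
    by (intro sum.cong refl arg_cong2[where f="(*)"] prod.cong) (use assms(2) wt_pmf in auto)
  finally show ?thesis .
qed

lemma split_stat_cong_fun:
  assumes "\<And>i. i \<in> {n1<..n} \<Longrightarrow> xs i = xs' i"
  shows "split_stat Lam G pd n1 n xs = split_stat Lam G pd n1 n xs'"
  by (rule ext, rule split_stat_cong) (auto simp: assms)

lemma boot_cong:
  assumes "\<And>i. i \<in> {n1<..n} \<Longrightarrow> xs i = xs' i"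
  shows "boot_dist Lam G pd n1 n xs = boot_dist Lam G pd n1 n xs'"
proof -
  have e: "split_stat Lam G pd n1 n xs = split_stat Lam G pd n1 n xs'"
    by (rule split_stat_cong_fun) (use assms in auto)
  show ?thesis unfolding boot_dist_def e
    by (intro arg_cong[where f="map_pmf _"] Pi_pmf_cong) (use assms in auto)
qed

lemma boot_finite: "finite (set_pmf (boot_dist Lam G pd n1 n xs))"
proof -
  have "set_pmf (Pi_pmf {n1<..n} False (\<lambda>i. bernoulli_pmf (pd (xs i)))) \<subseteq> PiE_dflt {n1<..n} False (\<lambda>_. UNIV)"
    using set_Pi_pmf_subset[of "{n1<..n}" False] by (auto simp: PiE_dflt_def)
  moreover have "finite (PiE_dflt {n1<..n} False (\<lambda>_::nat. UNIV :: bool set))" by auto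
  ultimately show ?thesis unfolding boot_dist_def by (auto intro: finite_subset)
qed

lemma boot_prob:
  assumes pd: "\<And>x. 0 \<le> pd x \<and> pd x \<le> 1"
  shows "measure_pmf.prob (boot_dist Lam G pd n1 n xs) {t. P t}
    = (\<Sum>ys\<in>PiE {n1<..n} (\<lambda>_. UNIV). (\<Prod>j\<in>{n1<..n}. wt (pd (xs j)) (ys j)) *
          of_bool (P (split_stat Lam G pd n1 n xs ys)))"
proof -
  have "measure_pmf.prob (boot_dist Lam G pd n1 n xs) {t. P t}
        = measure_pmf.prob (Pi_pmf {n1<..n} False (\<lambda>i. bernoulli_pmf (pd (xs i)))) {h. P (split_stat Lam G pd n1 n xs h)}"
    unfolding boot_dist_def by (simp add: vimage_def)
  also have "\<dots> = (\<Sum>ys\<in>PiE {n1<..n} (\<lambda>_. UNIV). (\<Prod>j\<in>{n1<..n}. wt (pd (xs j)) (ys j)) *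
          of_bool (P (split_stat Lam G pd n1 n xs ys)))"
  proof (rule Pi_pmf_prob_wt)
    fix h h' :: "nat \<Rightarrow> bool" assume "\<And>j. j \<in> {n1<..n} \<Longrightarrow> h j = h' j"
    then have "split_stat Lam G pd n1 n xs h = split_stat Lam G pd n1 n xs h'"
      by (intro split_stat_cong) auto
    then show "P (split_stat Lam G pd n1 n xs h) = P (split_stat Lam G pd n1 n xs h')" by simp
  qed (use pd in auto)
  finally show ?thesis .
qed

lemma pointwise_bound:
  fixes G :: "'l \<Rightarrow> 'x \<Rightarrow> real"
  assumes Lam: "finite Lam" "Lam \<noteq> {}" and Gb: "\<And>l. l \<in> Lam \<Longrightarrow> bounded (range (G l))"
    and pd: "\<And>x. 0 \<le> pd x \<and> pd x \<le> 1"
    and a: "\<And>j. j \<in> {n1<..n} \<Longrightarrow> 0 \<le> a j \<and> a j \<le> pd (xs j)"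
    and alpha: "0 < \<alpha>" "\<alpha> < 1"
  shows "(\<Sum>ys\<in>PiE {n1<..n} (\<lambda>_. UNIV). ennreal (\<Prod>j\<in>{n1<..n}. wt (a j) (ys j)) *
           indicator {ys. split_stat Lam G pd n1 n xs ys > quantile_pmf (boot_dist Lam G pd n1 n xs) \<alpha>} ys)
         \<le> ennreal \<alpha>"
proof -
  let ?N = "{n1<..n}"
  let ?\<tau> = "quantile_pmf (boot_dist Lam G pd n1 n xs) \<alpha>"
  let ?R = "\<lambda>ys. split_stat Lam G pd n1 n xs ys > ?\<tau>"
  have Rc: "?R h = ?R h'" if "\<And>j. j \<in> ?N \<Longrightarrow> h j = h' j" for h h'
  proof -
    have "split_stat Lam G pd n1 n xs h = split_stat Lam G pd n1 n xs h'"
      by (rule split_stat_cong) (use that in auto)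
    then show ?thesis by simp
  qed
  have Rm: "?R h \<Longrightarrow> ?R h'" if "\<And>j. h j \<Longrightarrow> h' j" for h h'
  proof -
    have "split_stat Lam G pd n1 n xs h \<le> split_stat Lam G pd n1 n xs h'"
      by (rule split_stat_mono[OF Lam Gb pd]) (use that in auto)
    then show "?R h \<Longrightarrow> ?R h'" by simp
  qed
  have a01: "\<And>j. j \<in> ?N \<Longrightarrow> 0 \<le> a j \<and> a j \<le> 1" using a pd by (meson order.trans)
  have "(\<Sum>ys\<in>PiE ?N (\<lambda>_. UNIV). ennreal (\<Prod>j\<in>?N. wt (a j) (ys j)) * indicator {ys. ?R ys} ys)
      = ennreal (\<Sum>ys\<in>PiE ?N (\<lambda>_. UNIV). (\<Prod>j\<in>?N. wt (a j) (ys j)) * of_bool (?R ys))"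
  proof -
    have nn: "0 \<le> (\<Prod>j\<in>?N. wt (a j) (ys j))" for ys
      using a01 by (auto intro!: prod_nonneg wt_nonneg)
    have "(\<Sum>ys\<in>PiE ?N (\<lambda>_. UNIV). ennreal (\<Prod>j\<in>?N. wt (a j) (ys j)) * indicator {ys. ?R ys} ys)
        = (\<Sum>ys\<in>PiE ?N (\<lambda>_. UNIV). ennreal ((\<Prod>j\<in>?N. wt (a j) (ys j)) * of_bool (?R ys)))"
      using nn by (intro sum.cong refl) (auto simp: indicator_def)
    also have "\<dots> = ennreal (\<Sum>ys\<in>PiE ?N (\<lambda>_. UNIV). (\<Prod>j\<in>?N. wt (a j) (ys j)) * of_bool (?R ys))"
      using nn by (intro sum_ennreal) auto
    finally show ?thesis .
  qed
  also have "\<dots> = ennreal (measure_pmf.prob (Pi_pmf ?N False (\<lambda>j. bernoulli_pmf (a j))) {h. ?R h})"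
    by (subst Pi_pmf_prob_wt[OF _ a01 Rc]) auto
  also have "\<dots> = emeasure (Pi_pmf ?N False (\<lambda>j. bernoulli_pmf (a j))) {h. ?R h}"
    by (simp add: measure_pmf.emeasure_eq_measure)
  also have "\<dots> = (\<integral>\<^sup>+h. indicator {h. ?R h} h \<partial>Pi_pmf ?N False (\<lambda>j. bernoulli_pmf (a j)))"
    by simp
  also have "\<dots> \<le> (\<integral>\<^sup>+h. indicator {h. ?R h} h \<partial>Pi_pmf ?N False (\<lambda>j. bernoulli_pmf (pd (xs j))))"
  proof (rule Pi_pmf_dominance)
    show "\<forall>j\<in>?N. 0 \<le> a j \<and> a j \<le> pd (xs j) \<and> pd (xs j) \<le> 1" using a pd by auto
    fix h h' :: "nat \<Rightarrow> bool" assume "\<And>j. h j \<Longrightarrow> h' j"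
    then show "indicator {h. ?R h} h \<le> (indicator {h. ?R h} h' :: ennreal)"
      using Rm[of h h'] by (auto simp: indicator_def)
  qed simp
  also have "\<dots> = emeasure (Pi_pmf ?N False (\<lambda>j. bernoulli_pmf (pd (xs j)))) {h. ?R h}"
    by simp
  also have "\<dots> = emeasure (boot_dist Lam G pd n1 n xs) {s. s > ?\<tau>}"
    unfolding boot_dist_def by (simp add: vimage_def)
  also have "\<dots> = ennreal (measure_pmf.prob (boot_dist Lam G pd n1 n xs) {s. s > ?\<tau>})"
    by (simp add: measure_pmf.emeasure_eq_measure)
  also have "\<dots> \<le> ennreal \<alpha>"
    by (intro ennreal_leI quantile_tail boot_finite alpha)
  finally show ?thesis .
qed

lemma ofb_less_meas:
  fixes u v :: "'k \<Rightarrow> real"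
  assumes [measurable]: "u \<in> borel_measurable K" "v \<in> borel_measurable K"
  shows "(\<lambda>k. of_bool (u k < v k) :: real) \<in> borel_measurable K"
  unfolding of_bool_def by measurable

lemma S_meas:
  fixes K :: "'k measure" and Gk :: "'k \<Rightarrow> 'l \<Rightarrow> 'x \<Rightarrow> real" and xk :: "'k \<Rightarrow> nat \<Rightarrow> 'x"
    and yk :: "'k \<Rightarrow> nat \<Rightarrow> bool"
  assumes Lam: "finite Lam" and Gb: "\<And>l k. l \<in> Lam \<Longrightarrow> bounded (range (Gk k l))"
    and pd: "\<And>x. 0 \<le> pd x \<and> pd x \<le> 1"
    and Am: "\<And>l i. l \<in> Lam \<Longrightarrow> i \<in> {n1<..n} \<Longrightarrow> (\<lambda>k. Gk k l (xk k i)) \<in> borel_measurable K"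
    and Pm: "\<And>i. i \<in> {n1<..n} \<Longrightarrow> (\<lambda>k. pd (xk k i)) \<in> borel_measurable K"
    and Ym: "\<And>i. i \<in> {n1<..n} \<Longrightarrow> (\<lambda>k. of_bool (yk k i) :: real) \<in> borel_measurable K"
  shows "(\<lambda>k. split_stat Lam (Gk k) pd n1 n (xk k) (yk k)) \<in> borel_measurable K"
proof -
  have eq: "split_stat Lam (Gk k) pd n1 n (xk k) (yk k)
     = (SUP rl\<in>(\<rat> \<inter> {0..}) \<times> Lam. sval (Gk k) pd n1 n (xk k) (yk k) (fst rl) (snd rl))" for k
    by (rule split_stat_SUP)
  show ?thesis unfolding eq
  proof (rule borel_measurable_cSUP)
    show "countable ((\<rat> \<inter> {0..}) \<times> Lam)"
      by (intro countable_SIGMA countable_Int1[OF countable_rat] countable_finite[OF Lam])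
  next
    fix rl :: "real \<times> 'l" assume rl: "rl \<in> (\<rat> \<inter> {0..}) \<times> Lam"
    then have l: "snd rl \<in> Lam" by auto
    show "(\<lambda>k. sval (Gk k) pd n1 n (xk k) (yk k) (fst rl) (snd rl)) \<in> borel_measurable K"
      unfolding sval_def
    proof (intro borel_measurable_times borel_measurable_const borel_measurable_sum borel_measurable_diff)
      fix i assume i: "i \<in> {n1<..n}"
      show "(\<lambda>k. of_bool (yk k i) :: real) \<in> borel_measurable K" by (rule Ym[OF i])
      show "(\<lambda>k. pd (xk k i)) \<in> borel_measurable K" by (rule Pm[OF i])
      show "(\<lambda>k. Gk k (snd rl) (xk k i)) \<in> borel_measurable K" by (rule Am[OF l i])
      show "(\<lambda>k. of_bool (fst rl < Gk k (snd rl) (xk k i)) :: real) \<in> borel_measurable K"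
        by (rule ofb_less_meas[OF borel_measurable_const Am[OF l i]])
    qed
  next
    fix k
    have "bdd_above {sval (Gk k) pd n1 n (xk k) (yk k) \<gamma> l | \<gamma> l. 0 \<le> \<gamma> \<and> l \<in> Lam}"
      by (rule split_stat_bdd[OF Lam Gb pd])
    then show "bdd_above ((\<lambda>rl. sval (Gk k) pd n1 n (xk k) (yk k) (fst rl) (snd rl)) ` ((\<rat> \<inter> {0..}) \<times> Lam))"
    proof (rule bdd_above_mono)
      show "(\<lambda>rl. sval (Gk k) pd n1 n (xk k) (yk k) (fst rl) (snd rl)) ` ((\<rat> \<inter> {0..}) \<times> Lam)
          \<subseteq> {sval (Gk k) pd n1 n (xk k) (yk k) \<gamma> l | \<gamma> l. 0 \<le> \<gamma> \<and> l \<in> Lam}"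
      proof
        fix v assume "v \<in> (\<lambda>rl. sval (Gk k) pd n1 n (xk k) (yk k) (fst rl) (snd rl)) ` ((\<rat> \<inter> {0..}) \<times> Lam)"
        then obtain a b where "v = sval (Gk k) pd n1 n (xk k) (yk k) a b" "0 \<le> a" "b \<in> Lam" by auto
        then show "v \<in> {sval (Gk k) pd n1 n (xk k) (yk k) \<gamma> l | \<gamma> l. 0 \<le> \<gamma> \<and> l \<in> Lam}"
          by blast
      qed
    qed
  qed
qed

lemma event_char:
  assumes pd: "\<And>x. 0 \<le> pd x \<and> pd x \<le> 1" and alpha: "0 < \<alpha>" "\<alpha> < 1"
  shows "split_stat Lam G pd n1 n xs ys > quantile_pmf (boot_dist Lam G pd n1 n xs) \<alpha> \<longleftrightarrow>
    1 - \<alpha> \<le> (\<Sum>ys'\<in>PiE {n1<..n} (\<lambda>_. UNIV). (\<Prod>j\<in>{n1<..n}. wt (pd (xs j)) (ys' j)) *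
          of_bool (split_stat Lam G pd n1 n xs ys' < split_stat Lam G pd n1 n xs ys))"
  unfolding quantile_less_iff[OF boot_finite alpha] boot_prob[OF pd] ..

lemma event_meas:
  fixes K :: "'k measure" and Gk :: "'k \<Rightarrow> 'l \<Rightarrow> 'x \<Rightarrow> real" and xk :: "'k \<Rightarrow> nat \<Rightarrow> 'x"
    and yk :: "'k \<Rightarrow> nat \<Rightarrow> bool"
  assumes Lam: "finite Lam" and Gb: "\<And>l k. l \<in> Lam \<Longrightarrow> bounded (range (Gk k l))"
    and pd: "\<And>x. 0 \<le> pd x \<and> pd x \<le> 1"
    and Am: "\<And>l i. l \<in> Lam \<Longrightarrow> i \<in> {n1<..n} \<Longrightarrow> (\<lambda>k. Gk k l (xk k i)) \<in> borel_measurable K"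
    and Pm: "\<And>i. i \<in> {n1<..n} \<Longrightarrow> (\<lambda>k. pd (xk k i)) \<in> borel_measurable K"
    and Ym: "\<And>i. i \<in> {n1<..n} \<Longrightarrow> (\<lambda>k. of_bool (yk k i) :: real) \<in> borel_measurable K"
    and alpha: "0 < \<alpha>" "\<alpha> < 1"
  shows "{k \<in> space K. split_stat Lam (Gk k) pd n1 n (xk k) (yk k)
            > quantile_pmf (boot_dist Lam (Gk k) pd n1 n (xk k)) \<alpha>} \<in> sets K"
proof -
  let ?f = "\<lambda>k. (\<Sum>ys'\<in>PiE {n1<..n} (\<lambda>_. UNIV). (\<Prod>j\<in>{n1<..n}. wt (pd (xk k j)) (ys' j)) *
          of_bool (split_stat Lam (Gk k) pd n1 n (xk k) ys' < split_stat Lam (Gk k) pd n1 n (xk k) (yk k)))"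
  have S[measurable]: "(\<lambda>k. split_stat Lam (Gk k) pd n1 n (xk k) (yk k)) \<in> borel_measurable K"
    by (rule S_meas[OF Lam Gb pd Am Pm Ym])
  have fm[measurable]: "?f \<in> borel_measurable K"
  proof (intro borel_measurable_sum borel_measurable_times borel_measurable_prod)
    fix ys' :: "nat \<Rightarrow> bool" and j assume j: "j \<in> {n1<..n}"
    show "(\<lambda>k. wt (pd (xk k j)) (ys' j)) \<in> borel_measurable K"
      unfolding wt_def using Pm[OF j] by measurable
  next
    fix ys' :: "nat \<Rightarrow> bool"
    have "(\<lambda>k. split_stat Lam (Gk k) pd n1 n (xk k) ((\<lambda>k. ys') k)) \<in> borel_measurable K"
      by (rule S_meas[OF Lam Gb pd Am Pm]) auto
    then show "(\<lambda>k. of_bool (split_stat Lam (Gk k) pd n1 n (xk k) ys' < split_stat Lam (Gk k) pd n1 n (xk k) (yk k)) :: real)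
           \<in> borel_measurable K"
      by (intro ofb_less_meas S) simp
  qed
  have "{k \<in> space K. split_stat Lam (Gk k) pd n1 n (xk k) (yk k)
            > quantile_pmf (boot_dist Lam (Gk k) pd n1 n (xk k)) \<alpha>} = {k \<in> space K. 1 - \<alpha> \<le> ?f k}"
  proof (intro Collect_cong conj_cong refl)
    fix k show "split_stat Lam (Gk k) pd n1 n (xk k) (yk k) > quantile_pmf (boot_dist Lam (Gk k) pd n1 n (xk k)) \<alpha>
      \<longleftrightarrow> 1 - \<alpha> \<le> ?f k" by (rule event_char[OF pd alpha])
  qed
  also have "\<dots> \<in> sets K" by measurable
  finally show ?thesis .
qed

theorem theorem1:
  fixes M :: "'a measure" and Mx :: "'x measure"
    and X :: "nat \<Rightarrow> 'a \<Rightarrow> 'x" and Y :: "nat \<Rightarrow> 'a \<Rightarrow> bool"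
    and X0 :: "'a \<Rightarrow> 'x" and Y0 :: "'a \<Rightarrow> bool"
    and p0 phat :: "'x \<Rightarrow> real" and \<delta> \<alpha> :: real
    and n n1 :: nat and Lam :: "'l set"
    and g :: "'l \<Rightarrow> (nat \<Rightarrow> 'x \<times> bool) \<Rightarrow> 'x \<Rightarrow> real"
  assumes M: "prob_space M"
    and delta: "\<delta> \<ge> 0"
    and alpha: "0 < \<alpha>" "\<alpha> < 1"
    and phat: "phat \<in> borel_measurable Mx" "\<And>x. 0 \<le> phat x \<and> phat x \<le> 1"
    and p0: "p0 \<in> borel_measurable Mx" "\<And>x. 0 \<le> p0 x \<and> p0 x \<le> 1"
    and X0Y0: "X0 \<in> measurable M Mx" "Y0 \<in> measurable M (count_space UNIV)"
    and XY: "\<And>i. X i \<in> measurable M Mx" "\<And>i. Y i \<in> measurable M (count_space UNIV)"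
    and cond: "\<forall>B\<in>sets Mx. measure M {\<omega>\<in>space M. X0 \<omega> \<in> B \<and> Y0 \<omega>}
                 = (\<integral>\<omega>. indicator B (X0 \<omega>) * p0 (X0 \<omega>) \<partial>M)"
    and indep: "prob_space.indep_vars M (\<lambda>_. Mx \<Otimes>\<^sub>M count_space UNIV)
                  (\<lambda>i \<omega>. (X i \<omega>, Y i \<omega>)) {1..n}"
    and ident: "\<forall>i\<in>{1..n}. distr M (Mx \<Otimes>\<^sub>M count_space UNIV) (\<lambda>\<omega>. (X i \<omega>, Y i \<omega>))
                  = distr M (Mx \<Otimes>\<^sub>M count_space UNIV) (\<lambda>\<omega>. (X0 \<omega>, Y0 \<omega>))"
    and null: "measure M {\<omega>\<in>space M. p0 (X0 \<omega>) - phat (X0 \<omega>) > \<delta>} = 0"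
    and split: "n1 < n"
    and Lam: "finite Lam" "Lam \<noteq> {}"
    and g_meas: "\<And>l. l \<in> Lam \<Longrightarrow> (\<lambda>(D, x). g l D x) \<in> borel_measurable
                   ((\<Pi>\<^sub>M i\<in>{1..n1}. Mx \<Otimes>\<^sub>M count_space UNIV) \<Otimes>\<^sub>M Mx)"
    and g_bdd: "\<And>l D. l \<in> Lam \<Longrightarrow> bounded (range (g l D))"
  shows "measure M {\<omega>\<in>space M.
           let D = restrict (\<lambda>i. (X i \<omega>, Y i \<omega>)) {1..n1};
               G = (\<lambda>l. g l D);
               pd = pdelta phat \<delta>
           in split_stat Lam G pd n1 n (\<lambda>i. X i \<omega>) (\<lambda>i. Y i \<omega>)
                > quantile_pmf (boot_dist Lam G pd n1 n (\<lambda>i. X i \<omega>)) \<alpha>} \<le> \<alpha>"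
proof -
  interpret M: prob_space M by (rule M)
  define MQ where "MQ = Mx \<Otimes>\<^sub>M (count_space UNIV :: bool measure)"
  define Q where "Q = distr M MQ (\<lambda>\<omega>. (X0 \<omega>, Y0 \<omega>))"
  define PX where "PX = distr M Mx X0"
  define I where "I = {1..n}"
  define Tr where "Tr = {1..n1}"
  define N where "N = {n1<..n}"
  define pd where "pd = pdelta phat \<delta>"
  define \<phi> where "\<phi> z = (split_stat Lam (\<lambda>l. g l (restrict z Tr)) pd n1 n (\<lambda>i. fst (z i)) (\<lambda>i. snd (z i))
      > quantile_pmf (boot_dist Lam (\<lambda>l. g l (restrict z Tr)) pd n1 n (\<lambda>i. fst (z i))) \<alpha>)"
    for z :: "nat \<Rightarrow> 'x \<times> bool"
  define B where "B = {z \<in> space (PiM I (\<lambda>_. MQ)). \<phi> z}"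
  define Z where "Z \<omega> = (\<lambda>i\<in>I. (X i \<omega>, Y i \<omega>))" for \<omega>
  note [measurable] = X0Y0 XY phat(1) p0(1)
  have pd01: "\<And>x. 0 \<le> pd x \<and> pd x \<le> 1" unfolding pd_def by (rule pdelta_01)
  have pdm[measurable]: "pd \<in> borel_measurable Mx" unfolding pd_def pdelta_def by measurable
  have Qp: "prob_space Q" unfolding Q_def MQ_def by (intro M.prob_space_distr) measurable
  have PXp: "prob_space PX" unfolding PX_def by (intro M.prob_space_distr) measurable
  have sPX: "sets PX = sets Mx" unfolding PX_def by simp
  have sQ': "sets Q = sets MQ" unfolding Q_def by simp
  have sQ: "sets Q = sets (PX \<Otimes>\<^sub>M count_space UNIV)"
    unfolding sQ' MQ_def by (rule sets_pair_measure_cong[OF sPX[symmetric] refl])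
  have spQ: "space Q = space Mx \<times> UNIV" unfolding Q_def MQ_def by (simp add: space_pair_measure)
  have spPX: "space PX = space Mx" unfolding PX_def by simp
  have ITrN: "I = Tr \<union> N" "Tr \<inter> N = {}" unfolding I_def Tr_def N_def using split by auto
  have NI: "N \<subseteq> I" "Tr \<subseteq> I" using ITrN by auto
  have finN: "finite N" "finite Tr" unfolding N_def Tr_def by auto

  have Bm: "B \<in> sets (PiM I (\<lambda>_. MQ))"
  proof -
    have gm: "(\<lambda>z. g l (restrict z Tr) (fst (z i))) \<in> borel_measurable (PiM I (\<lambda>_. MQ))"
      if l: "l \<in> Lam" and i: "i \<in> N" for l i
    proof -
      have m1: "(\<lambda>z. (restrict z Tr, fst (z i))) \<in> measurable (PiM I (\<lambda>_. MQ)) ((PiM {1..n1} (\<lambda>_. Mx \<Otimes>\<^sub>M count_space UNIV)) \<Otimes>\<^sub>M Mx)"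
      proof (rule measurable_Pair)
        show "(\<lambda>z. restrict z Tr) \<in> measurable (PiM I (\<lambda>_. MQ)) (PiM {1..n1} (\<lambda>_. Mx \<Otimes>\<^sub>M count_space UNIV))"
          using measurable_restrict_subset[OF NI(2), of "\<lambda>_. MQ"] unfolding Tr_def MQ_def .
        have "(\<lambda>z. z i) \<in> measurable (PiM I (\<lambda>_. MQ)) MQ" using NI(1) i by (intro measurable_component_singleton) auto
        then show "(\<lambda>z. fst (z i)) \<in> measurable (PiM I (\<lambda>_. MQ)) Mx" unfolding MQ_def by measurable
      qed
      from measurable_comp[OF m1 g_meas[OF l]] show ?thesis by (simp add: comp_def)
    qed
    have cm: "(\<lambda>z. z i) \<in> measurable (PiM I (\<lambda>_. MQ)) MQ" if "i \<in> N" for i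
      using NI(1) that by (intro measurable_component_singleton) auto
    show ?thesis unfolding B_def \<phi>_def
    proof (rule event_meas)
      show "finite Lam" by (rule Lam(1))
      show "\<And>l k. l \<in> Lam \<Longrightarrow> bounded (range (g l (restrict k Tr)))" by (rule g_bdd)
      show "\<And>x. 0 \<le> pd x \<and> pd x \<le> 1" by (rule pd01)
      show "\<And>l i. l \<in> Lam \<Longrightarrow> i \<in> {n1<..n} \<Longrightarrow> (\<lambda>k. g l (restrict k Tr) (fst (k i))) \<in> borel_measurable (PiM I (\<lambda>_. MQ))"
        using gm unfolding N_def by blast
      fix i assume i: "i \<in> {n1<..n}"
      then have i': "i \<in> N" unfolding N_def .
      show "(\<lambda>k. pd (fst (k i))) \<in> borel_measurable (PiM I (\<lambda>_. MQ))"
        using cm[OF i'] unfolding MQ_def by measurable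
      have "(\<lambda>k. snd (k i)) \<in> measurable (PiM I (\<lambda>_. MQ)) (count_space UNIV)"
        using cm[OF i'] unfolding MQ_def by measurable
      moreover have "(of_bool :: bool \<Rightarrow> real) \<in> measurable (count_space UNIV) borel" by simp
      ultimately show "(\<lambda>k. of_bool (snd (k i)) :: real) \<in> borel_measurable (PiM I (\<lambda>_. MQ))"
        by (rule measurable_compose)
    qed (use alpha in auto)
  qed
  have Zm: "Z \<in> measurable M (PiM I (\<lambda>_. MQ))"
    unfolding Z_def MQ_def by (intro measurable_restrict) measurable
  have evt: "{\<omega>\<in>space M.
           let D = restrict (\<lambda>i. (X i \<omega>, Y i \<omega>)) {1..n1};
               G = (\<lambda>l. g l D);
               pd = pdelta phat \<delta>
           in split_stat Lam G pd n1 n (\<lambda>i. X i \<omega>) (\<lambda>i. Y i \<omega>)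
                > quantile_pmf (boot_dist Lam G pd n1 n (\<lambda>i. X i \<omega>)) \<alpha>} = Z -` B \<inter> space M"
  proof (intro equalityI subsetI)
    fix \<omega>
    have sp: "\<omega> \<in> space M \<Longrightarrow> Z \<omega> \<in> space (PiM I (\<lambda>_. MQ))" using measurable_space[OF Zm] by auto
    have r: "restrict (Z \<omega>) Tr = restrict (\<lambda>i. (X i \<omega>, Y i \<omega>)) {1..n1}"
      unfolding Z_def Tr_def[symmetric] using NI(2) by (simp add: Int_absorb1 Int_commute)
    have c1: "split_stat Lam G pd n1 n (\<lambda>i. fst (Z \<omega> i)) (\<lambda>i. snd (Z \<omega> i)) = split_stat Lam G pd n1 n (\<lambda>i. X i \<omega>) (\<lambda>i. Y i \<omega>)" for G
      by (rule split_stat_cong) (use NI(1) in \<open>auto simp: Z_def N_def\<close>)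
    have c2: "boot_dist Lam G pd n1 n (\<lambda>i. fst (Z \<omega> i)) = boot_dist Lam G pd n1 n (\<lambda>i. X i \<omega>)" for G
      by (rule boot_cong) (use NI(1) in \<open>auto simp: Z_def N_def\<close>)
    have eq: "\<phi> (Z \<omega>) = (split_stat Lam (\<lambda>l. g l (restrict (\<lambda>i. (X i \<omega>, Y i \<omega>)) {1..n1})) (pdelta phat \<delta>) n1 n (\<lambda>i. X i \<omega>) (\<lambda>i. Y i \<omega>)
                > quantile_pmf (boot_dist Lam (\<lambda>l. g l (restrict (\<lambda>i. (X i \<omega>, Y i \<omega>)) {1..n1})) (pdelta phat \<delta>) n1 n (\<lambda>i. X i \<omega>)) \<alpha>)"
      unfolding \<phi>_def r c1 c2 unfolding pd_def ..
    { assume "\<omega> \<in> {\<omega>\<in>space M.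
           let D = restrict (\<lambda>i. (X i \<omega>, Y i \<omega>)) {1..n1};
               G = (\<lambda>l. g l D);
               pd = pdelta phat \<delta>
           in split_stat Lam G pd n1 n (\<lambda>i. X i \<omega>) (\<lambda>i. Y i \<omega>)
                > quantile_pmf (boot_dist Lam G pd n1 n (\<lambda>i. X i \<omega>)) \<alpha>}"
      then show "\<omega> \<in> Z -` B \<inter> space M" using eq sp unfolding B_def by (auto simp: Let_def) }
    { assume "\<omega> \<in> Z -` B \<inter> space M"
      then show "\<omega> \<in> {\<omega>\<in>space M.
           let D = restrict (\<lambda>i. (X i \<omega>, Y i \<omega>)) {1..n1};
               G = (\<lambda>l. g l D);
               pd = pdelta phat \<delta>
           in split_stat Lam G pd n1 n (\<lambda>i. X i \<omega>) (\<lambda>i. Y i \<omega>)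
                > quantile_pmf (boot_dist Lam G pd n1 n (\<lambda>i. X i \<omega>)) \<alpha>}"
        using eq unfolding B_def by (auto simp: Let_def) }
  qed
  have Zeq: "Z = (\<lambda>\<omega>. \<lambda>i\<in>I. (X i \<omega>, Y i \<omega>))" by (rule ext) (simp add: Z_def)
  have Ine: "I \<noteq> {}" unfolding I_def using split by auto
  have distrZ: "distr M (PiM I (\<lambda>_. MQ)) Z = PiM I (\<lambda>_. Q)"
  proof -
    have ind: "M.indep_vars (\<lambda>_. MQ) (\<lambda>i \<omega>. (X i \<omega>, Y i \<omega>)) I" using indep unfolding MQ_def I_def .
    have "distr M (PiM I (\<lambda>_. MQ)) Z = PiM I (\<lambda>i. distr M MQ (\<lambda>\<omega>. (X i \<omega>, Y i \<omega>)))"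
      unfolding Zeq by (rule M.indep_vars_iff_distr_eq_PiM[THEN iffD1, OF Ine _ ind]) (unfold MQ_def, measurable)
    also have "\<dots> = PiM I (\<lambda>_. Q)"
      by (rule PiM_cong) (use ident in \<open>auto simp: Q_def MQ_def I_def\<close>)
    finally show ?thesis .
  qed
  have sPiQ: "sets (PiM I (\<lambda>_. Q)) = sets (PiM I (\<lambda>_. MQ))" by (rule sets_PiM_cong) (simp_all add: sQ')
  have Bs: "B \<in> sets (PiM (Tr \<union> N) (\<lambda>_. Q))" using Bm sPiQ ITrN(1) by simp
  interpret Qs: product_sigma_finite "\<lambda>_::nat. Q"
    unfolding product_sigma_finite_def using prob_space_imp_sigma_finite[OF Qp] by simp
  have p0m: "p0 \<in> borel_measurable PX" using p0(1) by (simp add: measurable_cong_sets[OF sPX refl])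
  have hQ: "(\<integral>\<^sup>+z. h z \<partial>Q) = (\<integral>\<^sup>+x. ennreal (p0 x) * h (x, True) + ennreal (1 - p0 x) * h (x, False) \<partial>PX)"
    if "h \<in> borel_measurable Q" for h
  proof -
    have "h \<in> borel_measurable (Mx \<Otimes>\<^sub>M count_space UNIV)"
      using that by (simp add: measurable_cong_sets[OF sQ' refl] MQ_def)
    from Q_formula[OF M X0Y0 p0 cond this] show ?thesis unfolding Q_def PX_def MQ_def .
  qed
  have ae1: "AE x in PX. p0 x \<le> pd x"
  proof -
    have Nset: "{\<omega>\<in>space M. p0 (X0 \<omega>) - phat (X0 \<omega>) > \<delta>} \<in> sets M" by measurable
    have Nn: "{\<omega>\<in>space M. p0 (X0 \<omega>) - phat (X0 \<omega>) > \<delta>} \<in> null_sets M"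
      using Nset null by (simp add: null_sets_def M.emeasure_eq_measure)
    have "AE \<omega> in M. \<not> (p0 (X0 \<omega>) - phat (X0 \<omega>) > \<delta>)"
      by (rule AE_I'[OF Nn]) auto
    then have "AE \<omega> in M. p0 (X0 \<omega>) \<le> pd (X0 \<omega>)"
    proof (rule AE_mp, intro AE_I2 impI)
      fix \<omega> assume "\<not> (p0 (X0 \<omega>) - phat (X0 \<omega>) > \<delta>)"
      then show "p0 (X0 \<omega>) \<le> pd (X0 \<omega>)"
        using p0(2)[of "X0 \<omega>"] phat(2)[of "X0 \<omega>"] unfolding pd_def pdelta_def by auto
    qed
    moreover have "{x \<in> space Mx. p0 x \<le> pd x} \<in> sets Mx" by measurable
    ultimately show ?thesis unfolding PX_def by (subst AE_distr_iff) auto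
  qed
  have ae2: "AE xs in PiM N (\<lambda>_. PX). \<forall>j\<in>N. p0 (xs j) \<le> pd (xs j)"
    by (intro eventually_ball_finite finN ballI AE_PiM_component[where P="\<lambda>x. p0 x \<le> pd x"] PXp ae1)
  have inner: "(\<integral>\<^sup>+zN. indicator B (merge Tr N (zT, zN)) \<partial>PiM N (\<lambda>_. Q)) \<le> ennreal \<alpha>"
    if zT: "zT \<in> space (PiM Tr (\<lambda>_. Q))" for zT
  proof -
    have Hm: "(\<lambda>zN. indicator B (merge Tr N (zT, zN)) :: ennreal) \<in> borel_measurable (PiM N (\<lambda>_. Q))"
    proof -
      have "(\<lambda>zN. (zT, zN)) \<in> measurable (PiM N (\<lambda>_. Q)) (PiM Tr (\<lambda>_. Q) \<Otimes>\<^sub>M PiM N (\<lambda>_. Q))"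
        using zT by (intro measurable_Pair measurable_const measurable_ident_sets) auto
      from measurable_comp[OF this measurable_merge]
      have "(\<lambda>zN. merge Tr N (zT, zN)) \<in> measurable (PiM N (\<lambda>_. Q)) (PiM (Tr \<union> N) (\<lambda>_. Q))"
        by (simp add: comp_def)
      then show ?thesis using Bs by measurable
    qed
    have "(\<integral>\<^sup>+zN. indicator B (merge Tr N (zT, zN)) \<partial>PiM N (\<lambda>_. Q))
      = (\<integral>\<^sup>+xs. (\<Sum>ys\<in>PiE N (\<lambda>_. UNIV). ennreal (\<Prod>j\<in>N. wt (p0 (xs j)) (ys j)) *
            indicator B (merge Tr N (zT, \<lambda>j\<in>N. (xs j, ys j)))) \<partial>PiM N (\<lambda>_. PX))"
      by (rule decomp[OF Qp PXp sQ p0m p0(2) hQ finN(1) Hm])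
    also have "\<dots> \<le> (\<integral>\<^sup>+xs. ennreal \<alpha> \<partial>PiM N (\<lambda>_. PX))"
    proof (rule nn_integral_mono_AE)
      show "AE xs in PiM N (\<lambda>_. PX). (\<Sum>ys\<in>PiE N (\<lambda>_. UNIV). ennreal (\<Prod>j\<in>N. wt (p0 (xs j)) (ys j)) *
            indicator B (merge Tr N (zT, \<lambda>j\<in>N. (xs j, ys j)))) \<le> ennreal \<alpha>"
        using ae2 AE_space
      proof (rule AE_mp[OF AE_conjI], intro AE_I2 impI, elim conjE)
        fix xs assume xsl: "\<forall>j\<in>N. p0 (xs j) \<le> pd (xs j)" and xs: "xs \<in> space (PiM N (\<lambda>_. PX))"
        let ?G = "\<lambda>l. g l zT"
        let ?R = "\<lambda>ys. split_stat Lam ?G pd n1 n xs ys > quantile_pmf (boot_dist Lam ?G pd n1 n xs) \<alpha>"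
        have ind: "indicator B (merge Tr N (zT, \<lambda>j\<in>N. (xs j, ys j))) = (indicator {ys. ?R ys} ys :: ennreal)"
          if ys: "ys \<in> PiE N (\<lambda>_. UNIV)" for ys
        proof -
          let ?z = "merge Tr N (zT, \<lambda>j\<in>N. (xs j, ys j))"
          have zT': "zT \<in> PiE Tr (\<lambda>_. space Mx \<times> UNIV)" using zT by (simp add: space_PiM spQ)
          have xs': "xs \<in> PiE N (\<lambda>_. space Mx)" using xs by (simp add: space_PiM spPX)
          have zsp: "?z \<in> space (PiM I (\<lambda>_. MQ))"
            unfolding space_PiM MQ_def space_pair_measure ITrN(1)
            using zT' xs' ITrN(2) by (auto simp: PiE_iff merge_def extensional_def)
          have rz: "restrict ?z Tr = zT"
            using restrict_merge(1)[OF ITrN(2), of zT "\<lambda>j\<in>N. (xs j, ys j)"] zT'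
            by (simp add: PiE_restrict)
          have fz: "fst (?z i) = xs i" "snd (?z i) = ys i" if "i \<in> {n1<..n}" for i
            using that ITrN(2) by (auto simp: merge_def N_def)
          have c1: "split_stat Lam ?G pd n1 n (\<lambda>i. fst (?z i)) (\<lambda>i. snd (?z i)) = split_stat Lam ?G pd n1 n xs ys"
            by (rule split_stat_cong) (use fz in auto)
          have c2: "boot_dist Lam ?G pd n1 n (\<lambda>i. fst (?z i)) = boot_dist Lam ?G pd n1 n xs"
            by (rule boot_cong) (use fz in auto)
          have "?z \<in> B \<longleftrightarrow> \<phi> ?z" unfolding B_def using zsp by simp
          also have "\<phi> ?z \<longleftrightarrow> ?R ys" unfolding \<phi>_def rz c1 c2 ..
          finally have "?z \<in> B \<longleftrightarrow> ?R ys" .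
          then show ?thesis by (simp add: indicator_def)
        qed
        have "(\<Sum>ys\<in>PiE N (\<lambda>_. UNIV). ennreal (\<Prod>j\<in>N. wt (p0 (xs j)) (ys j)) *
            indicator B (merge Tr N (zT, \<lambda>j\<in>N. (xs j, ys j))))
          = (\<Sum>ys\<in>PiE {n1<..n} (\<lambda>_. UNIV). ennreal (\<Prod>j\<in>{n1<..n}. wt (p0 (xs j)) (ys j)) *
            indicator {ys. ?R ys} ys)"
          using ind unfolding N_def by (intro sum.cong refl) auto
        also have "\<dots> \<le> ennreal \<alpha>"
        proof (rule pointwise_bound[OF Lam])
          show "\<And>l. l \<in> Lam \<Longrightarrow> bounded (range (?G l))" by (rule g_bdd)
          show "\<And>x. 0 \<le> pd x \<and> pd x \<le> 1" by (rule pd01)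
          show "\<And>j. j \<in> {n1<..n} \<Longrightarrow> 0 \<le> p0 (xs j) \<and> p0 (xs j) \<le> pd (xs j)"
            using xsl p0(2) unfolding N_def by auto
        qed (use alpha in auto)
        finally show "(\<Sum>ys\<in>PiE N (\<lambda>_. UNIV). ennreal (\<Prod>j\<in>N. wt (p0 (xs j)) (ys j)) *
            indicator B (merge Tr N (zT, \<lambda>j\<in>N. (xs j, ys j)))) \<le> ennreal \<alpha>" .
      qed
    qed
    also have "\<dots> = ennreal \<alpha>"
      using prob_space.emeasure_space_1[OF prob_space_PiM[of N "\<lambda>_. PX", OF PXp]] by simp
    finally show ?thesis .
  qed
  have "emeasure M (Z -` B \<inter> space M) = emeasure (distr M (PiM I (\<lambda>_. MQ)) Z) B"
    by (rule emeasure_distr[OF Zm Bm, symmetric])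
  also have "\<dots> = emeasure (PiM (Tr \<union> N) (\<lambda>_. Q)) B" unfolding distrZ unfolding ITrN(1) ..
  also have "\<dots> = (\<integral>\<^sup>+z. indicator B z \<partial>PiM (Tr \<union> N) (\<lambda>_. Q))" using Bs by simp
  also have "\<dots> = (\<integral>\<^sup>+zT. (\<integral>\<^sup>+zN. indicator B (merge Tr N (zT, zN)) \<partial>PiM N (\<lambda>_. Q)) \<partial>PiM Tr (\<lambda>_. Q))"
    by (rule Qs.product_nn_integral_fold[OF ITrN(2) finN(2) finN(1)]) (use Bs in measurable)
  also have "\<dots> \<le> (\<integral>\<^sup>+zT. ennreal \<alpha> \<partial>PiM Tr (\<lambda>_. Q))"
    by (intro nn_integral_mono inner)
  also have "\<dots> = ennreal \<alpha>"
    using prob_space.emeasure_space_1[OF prob_space_PiM[of Tr "\<lambda>_. Q", OF Qp]] by simp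
  finally have "emeasure M (Z -` B \<inter> space M) \<le> ennreal \<alpha>" .
  then have "measure M (Z -` B \<inter> space M) \<le> \<alpha>"
    using alpha by (simp add: M.emeasure_eq_measure)
  then show ?thesis unfolding evt .
qed

end
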